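(* Let $\mathbf A$ be a finite subdirectly irreducible cBCK-algebra and let $a$ be an atom of $\mathbf A$. Then $\mathbf A$ is generated (as a cBCK-algebra) by the set $\mathrm{m}(\mathbf A) \cup \{a\}$.
   Context: A BCK-algebra is an algebra $(A,\ominus,0)$ of type $(2,0)$ satisfying $((x\ominus y)\ominus(x\ominus z))\ominus(z\ominus y)=0$, $x\ominus 0=x$, $0\ominus x=0$, and the quasi-identity ($x\ominus y=0$ and $y\ominus x=0$ imply $x=y$). It is partially ordered by $x\le y$ iff $x\ominus y=0$; $0$ is the least element. A cBCK-algebra (commutative BCK-algebra) is a BCK-algebra additionally satisfying $x\ominus(x\ominus y)=y\ominus(y\ominus x)$; cBCK-algebras form a variety, and the order is a meet-semilattice with $x\wedge y=x\ominus(x\ominus y)$. It is known that a finite nontrivial subdirectly irreducible cBCK-algebra has a unique atom and, as a poset, is a rooted tree with root $0$. $\mathrm{m}(\mathbf A)$ denotes the set of maximal elements of $\mathbf A$. *)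

theory Defs
  imports Main
begin

text \<open>An algebra of type (2,0) is given by a carrier set A, a binary operation
  m (the operation \<ominus>) and a constant z (the element 0).\<close>

definition bck_algebra :: "'a set \<Rightarrow> ('a \<Rightarrow> 'a \<Rightarrow> 'a) \<Rightarrow> 'a \<Rightarrow> bool" where
  "bck_algebra A m z \<longleftrightarrow>
     z \<in> A \<and> (\<forall>x\<in>A. \<forall>y\<in>A. m x y \<in> A) \<and>
     (\<forall>x\<in>A. \<forall>y\<in>A. \<forall>w\<in>A. m (m (m x y) (m x w)) (m w y) = z) \<and>
     (\<forall>x\<in>A. m x z = x) \<and>
     (\<forall>x\<in>A. m z x = z) \<and>
     (\<forall>x\<in>A. \<forall>y\<in>A. m x y = z \<and> m y x = z \<longrightarrow> x = y)"

definition cbck_algebra :: "'a set \<Rightarrow> ('a \<Rightarrow> 'a \<Rightarrow> 'a) \<Rightarrow> 'a \<Rightarrow> bool" where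
  "cbck_algebra A m z \<longleftrightarrow> bck_algebra A m z \<and>
     (\<forall>x\<in>A. \<forall>y\<in>A. m x (m x y) = m y (m y x))"

definition bck_le :: "('a \<Rightarrow> 'a \<Rightarrow> 'a) \<Rightarrow> 'a \<Rightarrow> 'a \<Rightarrow> 'a \<Rightarrow> bool" where
  "bck_le m z x y \<longleftrightarrow> m x y = z"

definition bck_atom :: "'a set \<Rightarrow> ('a \<Rightarrow> 'a \<Rightarrow> 'a) \<Rightarrow> 'a \<Rightarrow> 'a \<Rightarrow> bool" where
  "bck_atom A m z a \<longleftrightarrow> a \<in> A \<and> a \<noteq> z \<and>
     (\<forall>x\<in>A. bck_le m z x a \<longrightarrow> x = z \<or> x = a)"

definition bck_maximal :: "'a set \<Rightarrow> ('a \<Rightarrow> 'a \<Rightarrow> 'a) \<Rightarrow> 'a \<Rightarrow> 'a set" where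
  "bck_maximal A m z = {x \<in> A. \<forall>y\<in>A. bck_le m z x y \<longrightarrow> y = x}"

text \<open>Congruences of the algebra (A, m, z): equivalence relations on A
  compatible with the binary operation (the constant is trivially respected).\<close>
definition alg_congruence :: "'a set \<Rightarrow> ('a \<Rightarrow> 'a \<Rightarrow> 'a) \<Rightarrow> ('a \<times> 'a) set \<Rightarrow> bool" where
  "alg_congruence A m \<theta> \<longleftrightarrow> equiv A \<theta> \<and>
     (\<forall>x1 y1 x2 y2. (x1, y1) \<in> \<theta> \<and> (x2, y2) \<in> \<theta> \<longrightarrow> (m x1 x2, m y1 y2) \<in> \<theta>)"

definition subdirectly_irreducible :: "'a set \<Rightarrow> ('a \<Rightarrow> 'a \<Rightarrow> 'a) \<Rightarrow> bool" where
  "subdirectly_irreducible A m \<longleftrightarrow>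
     (\<exists>x\<in>A. \<exists>y\<in>A. x \<noteq> y) \<and>
     \<Inter> {\<theta>. alg_congruence A m \<theta> \<and> \<theta> \<noteq> Id_on A} \<noteq> Id_on A"

inductive_set generated :: "('a \<Rightarrow> 'a \<Rightarrow> 'a) \<Rightarrow> 'a \<Rightarrow> 'a set \<Rightarrow> 'a set"
  for m :: "'a \<Rightarrow> 'a \<Rightarrow> 'a" and z :: 'a and X :: "'a set" where
  gen_base: "x \<in> X \<Longrightarrow> x \<in> generated m z X"
| gen_zero: "z \<in> generated m z X"
| gen_op: "x \<in> generated m z X \<Longrightarrow> y \<in> generated m z X \<Longrightarrow> m x y \<in> generated m z X"

end

theory Submission
  imports Defs
begin

locale cbck_loc =
  fixes A and m :: "'a \<Rightarrow> 'a \<Rightarrow> 'a" (infixl "\<ominus>" 70) and z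
  assumes zA: "z \<in> A" and cl: "x \<in> A \<Longrightarrow> y \<in> A \<Longrightarrow> x \<ominus> y \<in> A"
  and ax1: "x \<in> A \<Longrightarrow> y \<in> A \<Longrightarrow> w \<in> A \<Longrightarrow> ((x \<ominus> y) \<ominus> (x \<ominus> w)) \<ominus> (w \<ominus> y) = z"
  and ax2: "x \<in> A \<Longrightarrow> x \<ominus> z = x"
  and ax3: "x \<in> A \<Longrightarrow> z \<ominus> x = z"
  and ax4: "x \<in> A \<Longrightarrow> y \<in> A \<Longrightarrow> x \<ominus> y = z \<Longrightarrow> y \<ominus> x = z \<Longrightarrow> x = y"
  and comm: "x \<in> A \<Longrightarrow> y \<in> A \<Longrightarrow> x \<ominus> (x \<ominus> y) = y \<ominus> (y \<ominus> x)"
begin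

lemma L7: "x \<in> A \<Longrightarrow> y \<in> A \<Longrightarrow> (x \<ominus> (x \<ominus> y)) \<ominus> y = z"
  using ax1[of x z y] by (simp add: ax2 zA)
lemma L1: "x \<in> A \<Longrightarrow> x \<ominus> x = z"
  using L7[of x z] by (simp add: ax2 zA cl)
lemma L2: "x \<in> A \<Longrightarrow> y \<in> A \<Longrightarrow> w \<in> A \<Longrightarrow> x \<ominus> y = z \<Longrightarrow> y \<ominus> w = z \<Longrightarrow> x \<ominus> w = z"
  using ax1[of x w y] by (simp add: ax2 zA cl)
lemma L3: "x \<in> A \<Longrightarrow> y \<in> A \<Longrightarrow> w \<in> A \<Longrightarrow> x \<ominus> y = z \<Longrightarrow> (w \<ominus> y) \<ominus> (w \<ominus> x) = z"
  using ax1[of w y x] by (simp add: ax2 zA cl)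
lemma L5: "x \<in> A \<Longrightarrow> y \<in> A \<Longrightarrow> (x \<ominus> y) \<ominus> x = z"
  by (metis L3 ax2 ax3 zA)
lemma L4: "x \<in> A \<Longrightarrow> y \<in> A \<Longrightarrow> w \<in> A \<Longrightarrow> x \<ominus> y = z \<Longrightarrow> (x \<ominus> w) \<ominus> (y \<ominus> w) = z"
  by (metis ax1 ax2 cl)
lemma L6: "x \<in> A \<Longrightarrow> y \<in> A \<Longrightarrow> w \<in> A \<Longrightarrow> ((x \<ominus> w) \<ominus> (y \<ominus> w)) \<ominus> (x \<ominus> y) = z"
proof -
  assume a1: "x \<in> A"
  assume a2: "y \<in> A"
  assume "w \<in> A"
  then have "\<exists>a. a \<in> A \<and> z = x \<ominus> w \<ominus> (y \<ominus> w) \<ominus> a \<and> x \<ominus> y \<in> A \<and> z = a \<ominus> (x \<ominus> y) \<and> x \<ominus> w \<ominus> (y \<ominus> w) \<in> A"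
    using a2 a1 by (metis L3 L7 ax1 cl)
  then show ?thesis
    by (metis (no_types) L2)
qed

lemma atom_below:
  assumes fin: "finite A" and d: "d \<in> A" "d \<noteq> z"
  shows "\<exists>c\<in>A. c \<noteq> z \<and> c \<ominus> d = z \<and> (\<forall>v\<in>A. v \<ominus> c = z \<longrightarrow> v = z \<or> v = c)"
proof -
  let ?P = "\<lambda>w. w \<in> A \<and> w \<noteq> z \<and> w \<ominus> d = z"
  let ?f = "\<lambda>w. card {v \<in> A. v \<ominus> w = z}"
  have "?P d" using d L1 by auto
  then obtain c where c: "?P c" and cmin: "\<And>y. ?P y \<Longrightarrow> ?f c \<le> ?f y"
    using ex_has_least_nat[of ?P d ?f] by blast
  have "\<forall>v\<in>A. v \<ominus> c = z \<longrightarrow> v = z \<or> v = c"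
  proof (intro ballI impI)
    fix v assume v: "v \<in> A" "v \<ominus> c = z"
    show "v = z \<or> v = c"
    proof (rule ccontr)
      assume nv: "\<not> (v = z \<or> v = c)"
      have Pv: "?P v" using v nv c L2 d by blast
      have sub: "{u \<in> A. u \<ominus> v = z} \<subset> {u \<in> A. u \<ominus> c = z}"
      proof
        show "{u \<in> A. u \<ominus> v = z} \<subseteq> {u \<in> A. u \<ominus> c = z}" using L2 v c by blast
        have "c \<notin> {u \<in> A. u \<ominus> v = z}" using ax4 v c nv by blast
        moreover have "c \<in> {u \<in> A. u \<ominus> c = z}" using c L1 by auto
        ultimately show "{u \<in> A. u \<ominus> v = z} \<noteq> {u \<in> A. u \<ominus> c = z}" by blast
      qed
      have "?f v < ?f c" by (rule psubset_card_mono) (use fin sub in auto)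
      with cmin[OF Pv] show False by simp
    qed
  qed
  with c show ?thesis by blast
qed

definition th :: "'a \<Rightarrow> ('a \<times> 'a) set" where
  "th c = {(x,y). x \<in> A \<and> y \<in> A \<and> c \<ominus> (x \<ominus> y) \<noteq> z \<and> c \<ominus> (y \<ominus> x) \<noteq> z}"

context
  fixes c assumes cA: "c \<in> A" and cnz: "c \<noteq> z"
    and catom: "\<forall>v\<in>A. v \<ominus> c = z \<longrightarrow> v = z \<or> v = c"
begin

lemma ideal: assumes "x \<in> A" "y \<in> A" "c \<ominus> (x \<ominus> y) \<noteq> z" "c \<ominus> y \<noteq> z"
  shows "c \<ominus> x \<noteq> z"
proof
  assume cx: "c \<ominus> x = z"
  let ?t = "c \<ominus> (x \<ominus> y)"
  have tA: "?t \<in> A" using assms cA cl by auto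
  have "?t \<ominus> c = z" using L5 cA assms cl by auto
  with catom tA assms have tc: "?t = c" by blast
  have "?t \<ominus> (x \<ominus> (x \<ominus> y)) = z" using L4[of c x "x \<ominus> y"] cx cA assms cl by auto
  hence "c \<ominus> (x \<ominus> (x \<ominus> y)) = z" using tc by simp
  hence "c \<ominus> y = z" using L2[of c "x \<ominus> (x \<ominus> y)" y] L7[of x y] cA assms cl by auto
  with assms show False by simp
qed

lemma down: assumes "u \<in> A" "v \<in> A" "u \<ominus> v = z" "c \<ominus> v \<noteq> z" shows "c \<ominus> u \<noteq> z"
  using L2[of c u v] assms cA by auto

lemma th_trans: assumes "(x,y) \<in> th c" "(y,w) \<in> th c" shows "(x,w) \<in> th c"
proof -
  have A: "x \<in> A" "y \<in> A" "w \<in> A" using assms unfolding th_def by auto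
  have 1: "c \<ominus> ((x \<ominus> w) \<ominus> (x \<ominus> y)) \<noteq> z"
    by (rule down[of _ "y \<ominus> w"]) (use A assms ax1 cl in \<open>auto simp: th_def\<close>)
  have 2: "c \<ominus> ((w \<ominus> x) \<ominus> (w \<ominus> y)) \<noteq> z"
    by (rule down[of _ "y \<ominus> x"]) (use A assms ax1 cl in \<open>auto simp: th_def\<close>)
  have "c \<ominus> (x \<ominus> w) \<noteq> z"
    by (rule ideal[of _ "x \<ominus> y"]) (use A assms 1 cl in \<open>auto simp: th_def\<close>)
  moreover have "c \<ominus> (w \<ominus> x) \<noteq> z"
    by (rule ideal[of _ "w \<ominus> y"]) (use A assms 2 cl in \<open>auto simp: th_def\<close>)
  ultimately show ?thesis using A unfolding th_def by auto
qed

lemma th_cong: "alg_congruence A m (th c)"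
  unfolding alg_congruence_def
proof (intro conjI allI impI)
  show "equiv A (th c)"
  proof (rule equivI)
    show "refl_on A (th c)" unfolding refl_on_def th_def using L1 ax2 cA cnz by auto
    show "sym (th c)" unfolding sym_def th_def by auto
    show "trans (th c)" unfolding trans_def using th_trans by blast
    show "th c \<subseteq> A \<times> A" unfolding th_def by auto
  qed
next
  fix x1 y1 x2 y2 assume h: "(x1, y1) \<in> th c \<and> (x2, y2) \<in> th c"
  have A: "x1 \<in> A" "y1 \<in> A" "x2 \<in> A" "y2 \<in> A" using h unfolding th_def by auto
  have s1: "(x1 \<ominus> x2, y1 \<ominus> x2) \<in> th c"
  proof -
    have "c \<ominus> ((x1 \<ominus> x2) \<ominus> (y1 \<ominus> x2)) \<noteq> z"
      by (rule down[of _ "x1 \<ominus> y1"]) (use A h L6 cl in \<open>auto simp: th_def\<close>)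
    moreover have "c \<ominus> ((y1 \<ominus> x2) \<ominus> (x1 \<ominus> x2)) \<noteq> z"
      by (rule down[of _ "y1 \<ominus> x1"]) (use A h L6 cl in \<open>auto simp: th_def\<close>)
    ultimately show ?thesis using A cl unfolding th_def by auto
  qed
  have s2: "(y1 \<ominus> x2, y1 \<ominus> y2) \<in> th c"
  proof -
    have "c \<ominus> ((y1 \<ominus> x2) \<ominus> (y1 \<ominus> y2)) \<noteq> z"
      by (rule down[of _ "y2 \<ominus> x2"]) (use A h ax1 cl in \<open>auto simp: th_def\<close>)
    moreover have "c \<ominus> ((y1 \<ominus> y2) \<ominus> (y1 \<ominus> x2)) \<noteq> z"
      by (rule down[of _ "x2 \<ominus> y2"]) (use A h ax1 cl in \<open>auto simp: th_def\<close>)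
    ultimately show ?thesis using A cl unfolding th_def by auto
  qed
  show "(x1 \<ominus> x2, y1 \<ominus> y2) \<in> th c" using th_trans[OF s1 s2] .
qed

end


lemma full_cong: "alg_congruence A m (A \<times> A)"
  unfolding alg_congruence_def by (auto simp: equiv_def refl_on_def sym_def trans_def cl)

lemma unique_atom:
  assumes fin: "finite A" and si: "subdirectly_irreducible A m"
  shows "\<exists>c\<in>A. c \<noteq> z \<and> (\<forall>x\<in>A. x \<noteq> z \<longrightarrow> c \<ominus> x = z)"
proof -
  let ?C = "{\<theta>. alg_congruence A m \<theta> \<and> \<theta> \<noteq> Id_on A}"
  obtain x0 y0 where xy: "x0 \<in> A" "y0 \<in> A" "x0 \<noteq> y0" using si unfolding subdirectly_irreducible_def by blast
  have "A \<times> A \<noteq> Id_on A" using xy by auto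
  hence fullC: "A \<times> A \<in> ?C" using full_cong by blast
  have sub1: "\<Inter> ?C \<subseteq> A \<times> A" using fullC by blast
  have sub2: "Id_on A \<subseteq> \<Inter> ?C"
  proof
    fix p assume "p \<in> Id_on A"
    then obtain x where "x \<in> A" "p = (x,x)" by auto
    moreover have "\<forall>\<theta>\<in>?C. (x,x) \<in> \<theta>" using \<open>x \<in> A\<close>
      unfolding alg_congruence_def equiv_def refl_on_def by blast
    ultimately show "p \<in> \<Inter> ?C" by blast
  qed
  have "\<Inter> ?C \<noteq> Id_on A" using si unfolding subdirectly_irreducible_def by blast
  hence "\<not> \<Inter> ?C \<subseteq> Id_on A" using sub2 by blast
  then obtain p q where pq: "(p,q) \<in> \<Inter> ?C" "(p,q) \<notin> Id_on A" by auto
  hence pq2: "p \<noteq> q" using sub1 by blast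
  have pA: "p \<in> A" "q \<in> A" using pq sub1 by auto
  obtain d where d: "d \<in> A" "d \<noteq> z" "d = p \<ominus> q \<or> d = q \<ominus> p"
    using ax4[OF pA] pA cl pq2 by metis
  obtain c where c: "c \<in> A" "c \<noteq> z" "c \<ominus> d = z" and catom: "\<forall>v\<in>A. v \<ominus> c = z \<longrightarrow> v = z \<or> v = c"
    using atom_below[OF fin d(1,2)] by blast
  have cong: "alg_congruence A m (th c)" using th_cong[OF c(1,2) catom] .
  have "th c = Id_on A"
  proof (rule ccontr)
    assume "th c \<noteq> Id_on A"
    hence "th c \<in> ?C" using cong by blast
    hence "(p,q) \<in> th c" using pq by blast
    hence "c \<ominus> (p \<ominus> q) \<noteq> z \<and> c \<ominus> (q \<ominus> p) \<noteq> z" unfolding th_def by auto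
    with d c show False by auto
  qed
  have "\<forall>x\<in>A. x \<noteq> z \<longrightarrow> c \<ominus> x = z"
  proof (intro ballI impI)
    fix x assume x: "x \<in> A" "x \<noteq> z"
    show "c \<ominus> x = z"
    proof (rule ccontr)
      assume "c \<ominus> x \<noteq> z"
      hence "(x,z) \<in> th c" unfolding th_def using x zA ax2 ax3 c by auto
      with \<open>th c = Id_on A\<close> x show False by auto
    qed
  qed
  with c show ?thesis by blast
qed

lemma cover_step:
  assumes a: "a \<in> A" "a \<noteq> z" and aall: "\<forall>x\<in>A. x \<noteq> z \<longrightarrow> a \<ominus> x = z"
    and xy: "x \<in> A" "y \<in> A" "x \<ominus> y = z" "x \<noteq> y"
    and cov: "\<forall>v\<in>A. x \<ominus> v = z \<and> v \<ominus> y = z \<longrightarrow> v = x \<or> v = y"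
  shows "y \<ominus> a = x"
proof -
  have dnz: "y \<ominus> x \<noteq> z" using ax4 xy by blast
  have ad: "a \<ominus> (y \<ominus> x) = z" using aall dnz xy cl by blast
  have ay: "a \<ominus> y = z" using L2[OF a(1) _ xy(2) ad] L5 xy cl by blast
  have yyx: "y \<ominus> (y \<ominus> x) = x" using comm[of x y] xy ax2 by simp
  have "(y \<ominus> (y \<ominus> x)) \<ominus> (y \<ominus> a) = z" using L3[OF a(1) _ xy(2) ad] xy cl by blast
  hence xu: "x \<ominus> (y \<ominus> a) = z" using yyx by simp
  have uy: "(y \<ominus> a) \<ominus> y = z" using L5 xy a by blast
  have "y \<ominus> a = x \<or> y \<ominus> a = y" using cov xu uy cl a xy by blast
  moreover have "y \<ominus> a \<noteq> y"
  proof
    assume "y \<ominus> a = y"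
    have "a = a \<ominus> (a \<ominus> y)" using ay ax2 a by simp
    also have "\<dots> = y \<ominus> (y \<ominus> a)" using comm a xy by blast
    also have "\<dots> = z" using \<open>y \<ominus> a = y\<close> L1 xy by simp
    finally show False using a by simp
  qed
  ultimately show ?thesis by blast
qed

lemma gen_sub: "x \<in> generated m z X \<Longrightarrow> X \<subseteq> A \<Longrightarrow> x \<in> A"
  by (induction rule: generated.induct) (auto simp: zA cl)

lemma all_gen:
  assumes fin: "finite A" and a: "a \<in> A" "a \<noteq> z" and aall: "\<forall>x\<in>A. x \<noteq> z \<longrightarrow> a \<ominus> x = z"
  shows "x \<in> A \<Longrightarrow> x \<in> generated m z (bck_maximal A m z \<union> {a})"
proof (induction "card {v\<in>A. x \<ominus> v = z \<and> v \<noteq> x}" arbitrary: x rule: less_induct)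
  case less
  let ?S = "generated m z (bck_maximal A m z \<union> {a})"
  show ?case
  proof (cases "x \<in> bck_maximal A m z")
    case True thus ?thesis by (auto intro: gen_base)
  next
    case False
    let ?P = "\<lambda>y. y \<in> A \<and> x \<ominus> y = z \<and> y \<noteq> x"
    let ?f = "\<lambda>w. card {v \<in> A. v \<ominus> w = z}"
    obtain y0 where "?P y0" using False less.prems unfolding bck_maximal_def bck_le_def by blast
    then obtain y where y: "?P y" and ymin: "\<And>w. ?P w \<Longrightarrow> ?f y \<le> ?f w"
      using ex_has_least_nat[of ?P y0 ?f] by blast
    have cov: "\<forall>v\<in>A. x \<ominus> v = z \<and> v \<ominus> y = z \<longrightarrow> v = x \<or> v = y"
    proof (intro ballI impI)
      fix v assume v: "v \<in> A" "x \<ominus> v = z \<and> v \<ominus> y = z"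
      show "v = x \<or> v = y"
      proof (rule ccontr)
        assume nv: "\<not> (v = x \<or> v = y)"
        have Pv: "?P v" using v nv by blast
        have sub: "{u \<in> A. u \<ominus> v = z} \<subset> {u \<in> A. u \<ominus> y = z}"
        proof
          show "{u \<in> A. u \<ominus> v = z} \<subseteq> {u \<in> A. u \<ominus> y = z}" using L2 v y by blast
          have "y \<notin> {u \<in> A. u \<ominus> v = z}" using ax4 v y nv by blast
          moreover have "y \<in> {u \<in> A. u \<ominus> y = z}" using y L1 by auto
          ultimately show "{u \<in> A. u \<ominus> v = z} \<noteq> {u \<in> A. u \<ominus> y = z}" by blast
        qed
        have "?f v < ?f y" by (rule psubset_card_mono) (use fin sub in auto)
        with ymin[OF Pv] show False by simp
      qed
    qed
    have sub: "{v\<in>A. y \<ominus> v = z \<and> v \<noteq> y} \<subset> {v\<in>A. x \<ominus> v = z \<and> v \<noteq> x}"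
    proof
      show "{v\<in>A. y \<ominus> v = z \<and> v \<noteq> y} \<subseteq> {v\<in>A. x \<ominus> v = z \<and> v \<noteq> x}"
      proof
        fix v assume v: "v \<in> {v\<in>A. y \<ominus> v = z \<and> v \<noteq> y}"
        have "x \<ominus> v = z" using L2[of x y v] v y less.prems by auto
        moreover have "v \<noteq> x" using ax4[of x y] v y by auto
        ultimately show "v \<in> {v\<in>A. x \<ominus> v = z \<and> v \<noteq> x}" using v by auto
      qed
      have "y \<notin> {v\<in>A. y \<ominus> v = z \<and> v \<noteq> y}" by auto
      moreover have "y \<in> {v\<in>A. x \<ominus> v = z \<and> v \<noteq> x}" using y by auto
      ultimately show "{v\<in>A. y \<ominus> v = z \<and> v \<noteq> y} \<noteq> {v\<in>A. x \<ominus> v = z \<and> v \<noteq> x}" by blast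
    qed
    have "card {v\<in>A. y \<ominus> v = z \<and> v \<noteq> y} < card {v\<in>A. x \<ominus> v = z \<and> v \<noteq> x}"
      by (rule psubset_card_mono) (use fin sub in auto)
    hence yS: "y \<in> ?S" using less.hyps y by blast
    have "y \<ominus> a = x" using cover_step[OF a aall less.prems] y cov by blast
    moreover have "y \<ominus> a \<in> ?S" using yS by (auto intro: gen_op gen_base)
    ultimately show ?thesis by simp
  qed
qed
end



theorem mainTheorem1:
  fixes A :: "'a set" and m :: "'a \<Rightarrow> 'a \<Rightarrow> 'a" and z :: 'a and a :: 'a
  assumes "cbck_algebra A m z"
    and "finite A"
    and "subdirectly_irreducible A m"
    and "bck_atom A m z a"
  shows "generated m z (bck_maximal A m z \<union> {a}) = A"
proof -
  interpret cbck_loc A m z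
    using assms(1) unfolding cbck_algebra_def bck_algebra_def by unfold_locales blast+
  obtain c where c: "c \<in> A" "c \<noteq> z" "\<forall>x\<in>A. x \<noteq> z \<longrightarrow> m c x = z"
    using unique_atom[OF assms(2,3)] by blast
  have a: "a \<in> A" "a \<noteq> z" and aat: "\<forall>x\<in>A. m x a = z \<longrightarrow> x = z \<or> x = a"
    using assms(4) unfolding bck_atom_def bck_le_def by auto
  have "c = a" using c a aat by blast
  hence aall: "\<forall>x\<in>A. x \<noteq> z \<longrightarrow> m a x = z" using c by simp
  have "bck_maximal A m z \<union> {a} \<subseteq> A" using a unfolding bck_maximal_def by auto
  thus ?thesis using gen_sub all_gen[OF assms(2) a aall] by blast
qed

end
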